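(* For $1\le\ell\le n$ let $s_{n,\ell}$ be the number of permutations $\sigma$ of $\{1,\dots,n\}$ avoiding both $1324$ and $2134$ with $\sigma(n)=\ell$. Then \begin{align*} s_{1,1}&=1,\quad s_{2,1}=s_{2,2}=1,\\ s_{n,1}&=s_{n,2}=s_{n,3}=\sum_{m=1}^{n-1}s_{n-1,m}\quad\text{for }n\ge3,\\ s_{n,\ell}&=2s_{n-1,\ell-1}+\sum_{m=\ell}^{n-1}s_{n-1,m}\quad\text{for }4\le\ell\le n. \end{align*}
   Context: A permutation avoids a pattern $p$ if no subsequence of its one-line notation is order-isomorphic to $p$. *)

theory Defs
  imports Main "HOL-Combinatorics.List_Permutation"
begin

text \<open>A permutation of {1..n} is represented by its one-line notation,
a list that is a permutation of the list [1..n].\<close>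

definition contains_pattern :: "nat list \<Rightarrow> nat list \<Rightarrow> bool" where
  "contains_pattern sigma p \<longleftrightarrow>
     (\<exists>idx :: nat list. length idx = length p \<and> sorted_wrt (<) idx \<and>
        (\<forall>i\<in>set idx. i < length sigma) \<and>
        (\<forall>a < length p. \<forall>b < length p.
            (sigma ! (idx ! a) < sigma ! (idx ! b)) \<longleftrightarrow> (p ! a < p ! b)))"

definition avoids :: "nat list \<Rightarrow> nat list \<Rightarrow> bool" where
  "avoids sigma p \<longleftrightarrow> \<not> contains_pattern sigma p"

definition s :: "nat \<Rightarrow> nat \<Rightarrow> nat" where
  "s n l = card {sigma :: nat list. mset sigma = mset [1..<n+1] \<and>
                 avoids sigma [1,3,2,4] \<and> avoids sigma [2,1,3,4] \<and>
                 sigma ! (n - 1) = l}"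

end

theory Submission
  imports Defs
begin


definition P4 :: "nat list \<Rightarrow> bool" where
  "P4 xs \<longleftrightarrow> (\<exists>i j k l. i<j \<and> j<k \<and> k<l \<and> l<length xs \<and>
     xs!i < xs!k \<and> xs!k < xs!j \<and> xs!j < xs!l)"
definition Q4 :: "nat list \<Rightarrow> bool" where
  "Q4 xs \<longleftrightarrow> (\<exists>i j k l. i<j \<and> j<k \<and> k<l \<and> l<length xs \<and>
     xs!j < xs!i \<and> xs!i < xs!k \<and> xs!k < xs!l)"

lemma four_cases: "(a::nat) < 4 \<Longrightarrow> a = 0 \<or> a = 1 \<or> a = 2 \<or> a = 3"
  by auto

lemma len4: "length (idx::nat list) = 4 \<Longrightarrow> idx = [idx!0, idx!1, idx!2, idx!3]"
  by (auto simp: list_eq_iff_nth_eq dest!: four_cases)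

lemma contains_P4: "contains_pattern xs [1,3,2,4] \<longleftrightarrow> P4 xs"
proof
  assume "contains_pattern xs [1,3,2,4]"
  then obtain idx where L0: "length idx = length [1,3,2,4::nat]" and S: "sorted_wrt (<) idx"
    and B: "\<forall>i\<in>set idx. i < length xs"
    and H: "\<forall>a < length [1,3,2,4::nat]. \<forall>b < length [1,3,2,4::nat]. (xs ! (idx ! a) < xs ! (idx ! b)) \<longleftrightarrow> ([1,3,2,4::nat] ! a < [1,3,2,4::nat] ! b)"
    using \<open>contains_pattern xs _\<close> unfolding contains_pattern_def by blast
  have L: "length idx = 4" using L0 by simp
  define i j k l where "i = idx!0" "j = idx!1" "k = idx!2" "l = idx!3"
  have E: "idx = [i,j,k,l]" using len4[OF L] i_j_k_l_def by simp
  have o: "i<j" "j<k" "k<l" "l < length xs" using S B unfolding E by auto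
  have "xs!i < xs!k" using H[rule_format, of 0 2] E by simp
  moreover have "xs!k < xs!j" using H[rule_format, of 2 1] E by simp
  moreover have "xs!j < xs!l" using H[rule_format, of 1 3] E by simp
  ultimately show "P4 xs" unfolding P4_def using o by blast
next
  assume "P4 xs"
  then obtain i j k l where o: "i<j" "j<k" "k<l" "l<length xs"
     "xs!i < xs!k" "xs!k < xs!j" "xs!j < xs!l" unfolding P4_def by blast
  show "contains_pattern xs [1,3,2,4]" unfolding contains_pattern_def
  proof (intro exI[of _ "[i,j,k,l]"] conjI allI impI)
    fix a b :: nat assume "a < length [1,3,2,4::nat]" "b < length [1,3,2,4::nat]"
    then have "a < 4" "b < 4" by auto
    then show "(xs ! ([i,j,k,l] ! a) < xs ! ([i,j,k,l] ! b)) = ([1,3,2,4::nat] ! a < [1,3,2,4] ! b)"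
      using o by (auto dest!: four_cases)
  qed (use o in auto)
qed

lemma contains_Q4: "contains_pattern xs [2,1,3,4] \<longleftrightarrow> Q4 xs"
proof
  assume "contains_pattern xs [2,1,3,4]"
  then obtain idx where L0: "length idx = length [2,1,3,4::nat]" and S: "sorted_wrt (<) idx"
    and B: "\<forall>i\<in>set idx. i < length xs"
    and H: "\<forall>a < length [2,1,3,4::nat]. \<forall>b < length [2,1,3,4::nat]. (xs ! (idx ! a) < xs ! (idx ! b)) \<longleftrightarrow> ([2,1,3,4::nat] ! a < [2,1,3,4::nat] ! b)"
    using \<open>contains_pattern xs _\<close> unfolding contains_pattern_def by blast
  have L: "length idx = 4" using L0 by simp
  define i j k l where "i = idx!0" "j = idx!1" "k = idx!2" "l = idx!3"
  have E: "idx = [i,j,k,l]" using len4[OF L] i_j_k_l_def by simp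
  have o: "i<j" "j<k" "k<l" "l < length xs" using S B unfolding E by auto
  have "xs!j < xs!i" using H[rule_format, of 1 0] E by simp
  moreover have "xs!i < xs!k" using H[rule_format, of 0 2] E by simp
  moreover have "xs!k < xs!l" using H[rule_format, of 2 3] E by simp
  ultimately show "Q4 xs" unfolding Q4_def using o by blast
next
  assume "Q4 xs"
  then obtain i j k l where o: "i<j" "j<k" "k<l" "l<length xs"
     "xs!j < xs!i" "xs!i < xs!k" "xs!k < xs!l" unfolding Q4_def by blast
  show "contains_pattern xs [2,1,3,4]" unfolding contains_pattern_def
  proof (intro exI[of _ "[i,j,k,l]"] conjI allI impI)
    fix a b :: nat assume "a < length [2,1,3,4::nat]" "b < length [2,1,3,4::nat]"
    then have "a < 4" "b < 4" by auto
    then show "(xs ! ([i,j,k,l] ! a) < xs ! ([i,j,k,l] ! b)) = ([2,1,3,4::nat] ! a < [2,1,3,4] ! b)"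
      using o by (auto dest!: four_cases)
  qed (use o in auto)
qed

lemma mset_perm: "mset xs = mset [1..<n+1] \<longleftrightarrow> distinct xs \<and> set xs = {1..n}"
  by (metis atLeastLessThanSuc_atLeastAtMost distinct_upt mset_eq_imp_distinct_iff set_eq_iff_mset_eq_distinct set_upt Suc_eq_plus1)



definition sh :: "nat \<Rightarrow> nat \<Rightarrow> nat" where "sh m x = (if m \<le> x then Suc x else x)"
definition unsh :: "nat \<Rightarrow> nat \<Rightarrow> nat" where "unsh m x = (if m < x then x - 1 else x)"
definition ins :: "nat \<Rightarrow> nat list \<Rightarrow> nat list" where "ins m xs = map (sh m) xs @ [m]"
definition del :: "nat list \<Rightarrow> nat list" where "del ys = map (unsh (last ys)) (butlast ys)"
definition Perm :: "nat \<Rightarrow> nat list set" where "Perm N = {xs. distinct xs \<and> set xs = {1..N}}"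

lemma Perm_len: "xs \<in> Perm N \<Longrightarrow> length xs = N"
  proof -
  assume "xs \<in> Perm N"
  hence "distinct xs" "set xs = {1..N}" unfolding Perm_def by auto
  hence "card {1..N} = length xs" using distinct_card by metis
  thus ?thesis by simp
qed

lemma finite_Perm: "finite (Perm N)"
proof -
  have "Perm N \<subseteq> {xs. set xs \<subseteq> {1..N} \<and> length xs = N}"
    using Perm_len unfolding Perm_def by auto
  thus ?thesis using finite_lists_length_eq[of "{1..N}" N] finite_subset by auto
qed

lemma sh_less[simp]: "sh m a < sh m b \<longleftrightarrow> a < b"
  unfolding sh_def by auto
lemma sh_eq[simp]: "sh m a = sh m b \<longleftrightarrow> a = b"
  unfolding sh_def by auto
lemma sh_lt_m[simp]: "sh m a < m \<longleftrightarrow> a < m"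
  unfolding sh_def by auto
lemma m_lt_sh[simp]: "m < sh m a \<longleftrightarrow> m \<le> a"
  unfolding sh_def by auto
lemma sh_ne[simp]: "sh m a \<noteq> m"
  unfolding sh_def by auto
lemma sh_ne2[simp]: "m = sh m a \<longleftrightarrow> False"
  unfolding sh_def by auto
lemma sh_lt_L: "m < L \<Longrightarrow> sh m a < L \<longleftrightarrow> a < L - 1"
  unfolding sh_def by auto

lemma unsh_sh[simp]: "unsh m (sh m x) = x"
  unfolding sh_def unsh_def by auto
lemma sh_unsh: "x \<noteq> m \<Longrightarrow> sh m (unsh m x) = x"
  unfolding sh_def unsh_def by auto

lemma ins_len[simp]: "length (ins m xs) = Suc (length xs)"
  unfolding ins_def by simp
lemma ins_last_nth: "ins m xs ! length xs = m"
  unfolding ins_def by (simp add: nth_append)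
lemma ins_nth: "i < length xs \<Longrightarrow> ins m xs ! i = sh m (xs ! i)"
  unfolding ins_def by (simp add: nth_append)

lemma ins_last[simp]: "last (ins m xs) = m"
  unfolding ins_def by simp

lemma del_ins[simp]: "del (ins m xs) = xs"
  unfolding del_def ins_def by (simp add: map_idI)

lemma ins_del: assumes "ys \<noteq> []" "distinct ys" shows "ins (last ys) (del ys) = ys"
proof -
  have "distinct (butlast ys @ [last ys])" using assms append_butlast_last_id by metis
  hence "\<forall>x\<in>set (butlast ys). x \<noteq> last ys" by auto
  hence "map (sh (last ys)) (map (unsh (last ys)) (butlast ys)) = butlast ys"
    by (simp add: map_idI sh_unsh)
  thus ?thesis unfolding ins_def del_def using assms(1) by simp
qed

lemma ins_Perm: assumes "xs \<in> Perm N" "1 \<le> m" "m \<le> Suc N" shows "ins m xs \<in> Perm (Suc N)"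
proof -
  have d: "distinct xs" and st: "set xs = {1..N}" using assms unfolding Perm_def by auto
  have "inj_on (sh m) (set xs)" by (simp add: inj_on_def)
  hence "distinct (map (sh m) xs)" using d by (simp add: distinct_map)
  moreover have "m \<notin> set (map (sh m) xs)" by auto
  ultimately have "distinct (ins m xs)" unfolding ins_def by simp
  moreover have "set (ins m xs) = {1..Suc N}"
  proof
    show "set (ins m xs) \<subseteq> {1..Suc N}" unfolding ins_def using st assms(2,3)
      by (auto simp: sh_def)
    show "{1..Suc N} \<subseteq> set (ins m xs)"
    proof
      fix y assume y: "y \<in> {1..Suc N}"
      show "y \<in> set (ins m xs)"
      proof (cases "y = m")
        case True thus ?thesis unfolding ins_def by simp
      next
        case False
        hence "y = sh m (unsh m y)" by (simp add: sh_unsh)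
        moreover have "unsh m y \<in> set xs" using y False assms(2,3) st by (auto simp: unsh_def)
        ultimately show ?thesis unfolding ins_def by (metis UnI1 image_eqI set_append set_map)
      qed
    qed
  qed
  ultimately show ?thesis unfolding Perm_def by simp
qed

lemma del_Perm: assumes "ys \<in> Perm (Suc N)" shows "del ys \<in> Perm N" "last ys \<in> {1..Suc N}"
proof -
  have d: "distinct ys" and st: "set ys = {1..Suc N}" using assms unfolding Perm_def by auto
  have ne: "ys \<noteq> []" using st by auto
  show lm: "last ys \<in> {1..Suc N}" using st ne last_in_set by blast
  have e: "ys = ins (last ys) (del ys)" using ins_del[OF ne d] by simp
  have "distinct (ins (last ys) (del ys))" using d e by simp
  hence dd: "distinct (del ys)" by (simp add: ins_def distinct_map)
  have "set (ins (last ys) (del ys)) = sh (last ys) ` set (del ys) \<union> {last ys}" by (auto simp: ins_def)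
  hence ss: "set ys = sh (last ys) ` set (del ys) \<union> {last ys}" using e by simp
  have nl: "last ys \<notin> sh (last ys) ` set (del ys)" by auto
  have i1: "sh (last ys) ` set (del ys) = {1..Suc N} - {last ys}" using ss nl st by auto
  have "unsh (last ys) ` (sh (last ys) ` set (del ys)) = set (del ys)" by (simp add: image_image)
  hence "set (del ys) = unsh (last ys) ` ({1..Suc N} - {last ys})" using i1 by simp
  also have "\<dots> = {1..N}"
  proof
    show "unsh (last ys) ` ({1..Suc N} - {last ys}) \<subseteq> {1..N}" using lm by (auto simp: unsh_def)
    show "{1..N} \<subseteq> unsh (last ys) ` ({1..Suc N} - {last ys})"
    proof
      fix x assume x: "x \<in> {1..N}"
      have "sh (last ys) x \<in> {1..Suc N} - {last ys}" using x by (auto simp: sh_def)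
      thus "x \<in> unsh (last ys) ` ({1..Suc N} - {last ys})" by (metis image_eqI unsh_sh)
    qed
  qed
  finally show "del ys \<in> Perm N" using dd unfolding Perm_def by simp
qed

lemma card_ins: "card {ys \<in> Perm (Suc N). P ys} =
   card {(xs, m). xs \<in> Perm N \<and> m \<in> {1..Suc N} \<and> P (ins m xs)}"
proof -
  have "bij_betw (\<lambda>(xs, m). ins m xs) {(xs, m). xs \<in> Perm N \<and> m \<in> {1..Suc N} \<and> P (ins m xs)}
          {ys \<in> Perm (Suc N). P ys}"
  proof (rule bij_betw_byWitness[where f'="\<lambda>ys. (del ys, last ys)"])
    show "\<forall>a\<in>{(xs, m). xs \<in> Perm N \<and> m \<in> {1..Suc N} \<and> P (ins m xs)}.
       (del (case a of (xs, m) \<Rightarrow> ins m xs), last (case a of (xs, m) \<Rightarrow> ins m xs)) = a"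
      by clarsimp
    show "\<forall>a'\<in>{ys \<in> Perm (Suc N). P ys}. (case (del a', last a') of (xs, m) \<Rightarrow> ins m xs) = a'"
    proof
      fix a' assume "a' \<in> {ys \<in> Perm (Suc N). P ys}"
      hence "a' \<noteq> []" "distinct a'" unfolding Perm_def by auto
      thus "(case (del a', last a') of (xs, m) \<Rightarrow> ins m xs) = a'" using ins_del by simp
    qed
    show "(\<lambda>(xs, m). ins m xs) ` {(xs, m). xs \<in> Perm N \<and> m \<in> {1..Suc N} \<and> P (ins m xs)}
          \<subseteq> {ys \<in> Perm (Suc N). P ys}" using ins_Perm by fastforce
    show "(\<lambda>ys. (del ys, last ys)) ` {ys \<in> Perm (Suc N). P ys}
          \<subseteq> {(xs, m). xs \<in> Perm N \<and> m \<in> {1..Suc N} \<and> P (ins m xs)}"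
    proof
      fix p assume "p \<in> (\<lambda>ys. (del ys, last ys)) ` {ys \<in> Perm (Suc N). P ys}"
      then obtain ys where ys: "ys \<in> Perm (Suc N)" "P ys" "p = (del ys, last ys)" by auto
      have "ys \<noteq> []" "distinct ys" using ys(1) unfolding Perm_def by auto
      hence "P (ins (last ys) (del ys))" using ys(2) ins_del by simp
      thus "p \<in> {(xs, m). xs \<in> Perm N \<and> m \<in> {1..Suc N} \<and> P (ins m xs)}"
        using ys del_Perm[OF ys(1)] by simp
    qed
  qed
  from bij_betw_same_card[OF this] show ?thesis by (rule sym)
qed



lemma ex3_ins:
  "(\<exists>i j k. i<j \<and> j<k \<and> k<length (ins m xs) \<and> R (ins m xs!i) (ins m xs!j) (ins m xs!k)) \<longleftrightarrow>
   (\<exists>i j k. i<j \<and> j<k \<and> k<length xs \<and> R (sh m (xs!i)) (sh m (xs!j)) (sh m (xs!k))) \<or>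
   (\<exists>i j. i<j \<and> j<length xs \<and> R (sh m (xs!i)) (sh m (xs!j)) m)"
  (is "?L \<longleftrightarrow> ?A \<or> ?B")
proof
  assume ?L
  then obtain i j k where H: "i<j" "j<k" "k<Suc (length xs)" "R (ins m xs!i) (ins m xs!j) (ins m xs!k)"
    by auto
  show "?A \<or> ?B"
  proof (cases "k = length xs")
    case True
    hence "R (sh m (xs!i)) (sh m (xs!j)) m" using H by (simp add: ins_nth ins_last_nth)
    thus ?thesis using H True by blast
  next
    case False
    hence "R (sh m (xs!i)) (sh m (xs!j)) (sh m (xs!k))" using H by (simp add: ins_nth)
    thus ?thesis using H False by (meson less_SucE)
  qed
next
  assume "?A \<or> ?B"
  thus ?L
  proof
    assume ?A
    then obtain i j k where H: "i<j" "j<k" "k<length xs" "R (sh m (xs!i)) (sh m (xs!j)) (sh m (xs!k))"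
      by auto
    hence "R (ins m xs!i) (ins m xs!j) (ins m xs!k)" by (simp add: ins_nth)
    thus ?L using H by (metis ins_len less_SucI)
  next
    assume ?B
    then obtain i j where H: "i<j" "j<length xs" "R (sh m (xs!i)) (sh m (xs!j)) m"
      by auto
    hence "R (ins m xs!i) (ins m xs!j) (ins m xs!length xs)" by (simp add: ins_nth ins_last_nth)
    thus ?L using H by (metis ins_len lessI)
  qed
qed

lemma ex4_ins:
  "(\<exists>i j k l. i<j \<and> j<k \<and> k<l \<and> l<length (ins m xs) \<and> R (ins m xs!i) (ins m xs!j) (ins m xs!k) (ins m xs!l)) \<longleftrightarrow>
   (\<exists>i j k l. i<j \<and> j<k \<and> k<l \<and> l<length xs \<and> R (sh m (xs!i)) (sh m (xs!j)) (sh m (xs!k)) (sh m (xs!l))) \<or>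
   (\<exists>i j k. i<j \<and> j<k \<and> k<length xs \<and> R (sh m (xs!i)) (sh m (xs!j)) (sh m (xs!k)) m)"
  (is "?L \<longleftrightarrow> ?A \<or> ?B")
proof
  assume ?L
  then obtain i j k l where H: "i<j" "j<k" "k<l" "l<Suc (length xs)" "R (ins m xs!i) (ins m xs!j) (ins m xs!k) (ins m xs!l)"
    by auto
  show "?A \<or> ?B"
  proof (cases "l = length xs")
    case True
    hence "R (sh m (xs!i)) (sh m (xs!j)) (sh m (xs!k)) m" using H by (simp add: ins_nth ins_last_nth)
    thus ?thesis using H True by blast
  next
    case False
    hence "R (sh m (xs!i)) (sh m (xs!j)) (sh m (xs!k)) (sh m (xs!l))" using H by (simp add: ins_nth)
    thus ?thesis using H False by (meson less_SucE)
  qed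
next
  assume "?A \<or> ?B"
  thus ?L
  proof
    assume ?A
    then obtain i j k l where H: "i<j" "j<k" "k<l" "l<length xs" "R (sh m (xs!i)) (sh m (xs!j)) (sh m (xs!k)) (sh m (xs!l))"
      by auto
    hence "R (ins m xs!i) (ins m xs!j) (ins m xs!k) (ins m xs!l)" by (simp add: ins_nth)
    thus ?L using H by (metis ins_len less_SucI)
  next
    assume ?B
    then obtain i j k where H: "i<j" "j<k" "k<length xs" "R (sh m (xs!i)) (sh m (xs!j)) (sh m (xs!k)) m"
      by auto
    hence "R (ins m xs!i) (ins m xs!j) (ins m xs!k) (ins m xs!length xs)" by (simp add: ins_nth ins_last_nth)
    thus ?L using H by (metis ins_len lessI)
  qed
qed

definition T132 :: "nat \<Rightarrow> nat list \<Rightarrow> bool" where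
  "T132 L xs \<longleftrightarrow> (\<exists>i j k. i<j \<and> j<k \<and> k<length xs \<and> xs!i<xs!k \<and> xs!k<xs!j \<and> xs!j<L)"
definition T213 :: "nat \<Rightarrow> nat list \<Rightarrow> bool" where
  "T213 L xs \<longleftrightarrow> (\<exists>i j k. i<j \<and> j<k \<and> k<length xs \<and> xs!j<xs!i \<and> xs!i<xs!k \<and> xs!k<L)"
definition good :: "nat \<Rightarrow> nat list \<Rightarrow> bool" where
  "good L xs \<longleftrightarrow> \<not> T132 L xs \<and> \<not> T213 L xs"

definition Cp :: "nat \<Rightarrow> nat \<Rightarrow> nat list \<Rightarrow> bool" where
  "Cp m K xs \<longleftrightarrow> \<not>(\<exists>i j. i<j \<and> j<length xs \<and>
     ((xs!i<m \<and> m \<le> xs!j \<and> xs!j<K) \<or> (xs!j<xs!i \<and> xs!i<m)))"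

lemma P4_ins: "P4 (ins m xs) \<longleftrightarrow> P4 xs \<or> T132 m xs"
  unfolding P4_def T132_def
  using ex4_ins[where R="\<lambda>a b c d. a<c \<and> c<b \<and> b<d" and m=m and xs=xs] by simp

lemma Q4_ins: "Q4 (ins m xs) \<longleftrightarrow> Q4 xs \<or> T213 m xs"
  unfolding Q4_def T213_def
  using ex4_ins[where R="\<lambda>a b c d. b<a \<and> a<c \<and> c<d" and m=m and xs=xs] by simp

lemma T132_ins: "m < L \<Longrightarrow> T132 L (ins m xs) \<longleftrightarrow> T132 (L-1) xs \<or>
   (\<exists>i j. i<j \<and> j<length xs \<and> xs!i<m \<and> m \<le> xs!j \<and> xs!j<L-1)"
  unfolding T132_def
  using ex3_ins[where R="\<lambda>a b c. a<c \<and> c<b \<and> b<L" and m=m and xs=xs] by (simp add: sh_lt_L)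

lemma T213_ins: "m < L \<Longrightarrow> T213 L (ins m xs) \<longleftrightarrow> T213 (L-1) xs \<or>
   (\<exists>i j. i<j \<and> j<length xs \<and> xs!j<xs!i \<and> xs!i<m)"
  unfolding T213_def
  using ex3_ins[where R="\<lambda>a b c. b<a \<and> a<c \<and> c<L" and m=m and xs=xs] by (simp add: sh_lt_L)

lemma good_ins: "m < L \<Longrightarrow> good L (ins m xs) \<longleftrightarrow> good (L-1) xs \<and> Cp m (L-1) xs"
  proof -
  assume a: "m < L"
  have "\<not>(\<exists>i j. i<j \<and> j<length xs \<and>
     ((xs!i<m \<and> m \<le> xs!j \<and> xs!j<L-1) \<or> (xs!j<xs!i \<and> xs!i<m))) \<longleftrightarrow>
    \<not>(\<exists>i j. i<j \<and> j<length xs \<and> xs!i<m \<and> m \<le> xs!j \<and> xs!j<L-1) \<and>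
    \<not>(\<exists>i j. i<j \<and> j<length xs \<and> xs!j<xs!i \<and> xs!i<m)" (is "_ \<longleftrightarrow> ?X") by blast
  then have "Cp m (L-1) xs \<longleftrightarrow> ?X" unfolding Cp_def .
  thus ?thesis unfolding good_def T132_ins[OF a] T213_ins[OF a] by argo
qed



definition AP :: "nat \<Rightarrow> nat list set" where "AP N = {xs \<in> Perm N. \<not> P4 xs \<and> \<not> Q4 xs}"
definition G :: "nat \<Rightarrow> nat \<Rightarrow> nat list set" where "G N L = {xs \<in> AP N. good L xs}"

lemma finite_AP: "finite (AP N)" unfolding AP_def using finite_Perm by simp
lemma finite_G: "finite (G N L)" unfolding G_def using finite_AP by simp

lemma s_alt: "s n l = card {xs \<in> AP n. xs!(n-1) = l}"
proof -
  have "{sigma :: nat list. mset sigma = mset [1..<n+1] \<and>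
                 avoids sigma [1,3,2,4] \<and> avoids sigma [2,1,3,4] \<and>
                 sigma ! (n - 1) = l} = {xs \<in> AP n. xs!(n-1) = l}"
    unfolding AP_def Perm_def avoids_def mset_perm contains_P4 contains_Q4 by blast
  thus ?thesis unfolding s_def by simp
qed

lemma card_fibers:
  assumes "finite A" "finite I" "\<forall>x\<in>A. f x \<in> I"
  shows "card A = (\<Sum>i\<in>I. card {x\<in>A. f x = i})"
proof -
  have "A = (\<Union>i\<in>I. {x\<in>A. f x = i})" using assms(3) by auto
  hence "card A = card (\<Union>i\<in>I. {x\<in>A. f x = i})" by simp
  also have "\<dots> = (\<Sum>i\<in>I. card {x\<in>A. f x = i})"
    by (rule card_UN_disjoint) (use assms in auto)
  finally show ?thesis .
qed

lemma Perm_nth: "xs \<in> Perm N \<Longrightarrow> i < length xs \<Longrightarrow> xs!i \<in> {1..N}"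
  unfolding Perm_def using nth_mem by blast

lemma Perm_has: "xs \<in> Perm N \<Longrightarrow> v \<in> {1..N} \<Longrightarrow> \<exists>i<length xs. xs!i = v"
proof -
  assume "xs \<in> Perm N" "v \<in> {1..N}"
  hence "v \<in> set xs" unfolding Perm_def by simp
  thus ?thesis by (simp add: in_set_conv_nth)
qed

lemma Perm_inj: "xs \<in> Perm N \<Longrightarrow> i < length xs \<Longrightarrow> j < length xs \<Longrightarrow> xs!i = xs!j \<Longrightarrow> i = j"
  unfolding Perm_def using nth_eq_iff_index_eq by blast

lemma good_mono: "good L xs \<Longrightarrow> L' \<le> L \<Longrightarrow> good L' xs"
proof -
  assume a: "good L xs" "L' \<le> L"
  have "T132 L' xs \<Longrightarrow> T132 L xs" unfolding T132_def using a(2) by (meson less_le_trans)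
  moreover have "T213 L' xs \<Longrightarrow> T213 L xs" unfolding T213_def using a(2) by (meson less_le_trans)
  ultimately show ?thesis using a(1) unfolding good_def by blast
qed

lemma s_G: assumes "1 \<le> l" "l \<le> Suc N" shows "s (Suc N) l = card (G N l)"
proof -
  have "s (Suc N) l = card {ys \<in> Perm (Suc N). \<not> P4 ys \<and> \<not> Q4 ys \<and> ys!N = l}"
    unfolding s_alt AP_def by (simp add: conj_assoc)
  also have "\<dots> = card {(xs, m). xs \<in> Perm N \<and> m \<in> {1..Suc N} \<and>
      (\<not> P4 (ins m xs) \<and> \<not> Q4 (ins m xs) \<and> ins m xs ! N = l)}"
    by (rule card_ins)
  also have "{(xs, m). xs \<in> Perm N \<and> m \<in> {1..Suc N} \<and>
      (\<not> P4 (ins m xs) \<and> \<not> Q4 (ins m xs) \<and> ins m xs ! N = l)} = G N l \<times> {l}"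
  proof (rule set_eqI)
    fix p :: "nat list \<times> nat"
    obtain xs m where p: "p = (xs, m)" by fastforce
    show "p \<in> {(xs, m). xs \<in> Perm N \<and> m \<in> {1..Suc N} \<and>
      (\<not> P4 (ins m xs) \<and> \<not> Q4 (ins m xs) \<and> ins m xs ! N = l)} \<longleftrightarrow> p \<in> G N l \<times> {l}"
    proof (cases "xs \<in> Perm N")
      case True
      hence "ins m xs ! N = m" using Perm_len ins_last_nth by metis
      thus ?thesis using True assms unfolding p G_def AP_def good_def P4_ins Q4_ins by auto
    next
      case False
      thus ?thesis unfolding p G_def AP_def by auto
    qed
  qed
  finally show ?thesis by (simp add: card_cartesian_product)
qed

lemma sum_s: assumes "1 \<le> N" shows "(\<Sum>m=1..N. s N m) = card (AP N)"
proof -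
  have "card (AP N) = (\<Sum>m\<in>{1..N}. card {xs \<in> AP N. xs!(N-1) = m})"
  proof (rule card_fibers)
    show "\<forall>x\<in>AP N. x ! (N - 1) \<in> {1..N}"
    proof
      fix x assume "x \<in> AP N"
      hence x: "x \<in> Perm N" by (simp add: AP_def)
      have "N - 1 < length x" using Perm_len[OF x] assms by simp
      thus "x ! (N - 1) \<in> {1..N}" by (rule Perm_nth[OF x])
    qed
  qed (use finite_AP in auto)
  thus ?thesis unfolding s_alt by simp
qed

lemma good_small: assumes "xs \<in> Perm N" "l \<le> 3" shows "good l xs"
proof -
  have "\<not> T132 l xs"
  proof
    assume "T132 l xs"
    then obtain i j k where "i<j" "j<k" "k<length xs" "xs!i<xs!k" "xs!k<xs!j" "xs!j<l"
      unfolding T132_def by blast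
    moreover have "xs!i \<ge> 1" using Perm_nth[OF assms(1)] \<open>i<j\<close> \<open>j<k\<close> \<open>k<length xs\<close> by force
    ultimately show False using assms(2) by linarith
  qed
  moreover have "\<not> T213 l xs"
  proof
    assume "T213 l xs"
    then obtain i j k where "i<j" "j<k" "k<length xs" "xs!j<xs!i" "xs!i<xs!k" "xs!k<l"
      unfolding T213_def by blast
    moreover have "xs!j \<ge> 1" using Perm_nth[OF assms(1)] \<open>j<k\<close> \<open>k<length xs\<close> by force
    ultimately show False using assms(2) by linarith
  qed
  ultimately show ?thesis unfolding good_def by simp
qed

lemma good_auto: assumes "xs \<in> AP (Suc M)" "l \<le> xs!M" shows "good l xs"
proof -
  have len: "length xs = Suc M" using assms(1) Perm_len unfolding AP_def by blast
  have nP: "\<not> P4 xs" and nQ: "\<not> Q4 xs" using assms(1) unfolding AP_def by auto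
  have "\<not> T132 l xs"
  proof
    assume "T132 l xs"
    then obtain i j k where H: "i<j" "j<k" "k<length xs" "xs!i<xs!k" "xs!k<xs!j" "xs!j<l"
      unfolding T132_def by blast
    show False
    proof (cases "k = M")
      case True thus False using H assms(2) by simp
    next
      case False
      hence "k < M" using H len by simp
      have "P4 xs" unfolding P4_def using H \<open>k<M\<close> assms(2) len
        by (intro exI[of _ i] exI[of _ j] exI[of _ k] exI[of _ M]) auto
      thus False using nP by simp
    qed
  qed
  moreover have "\<not> T213 l xs"
  proof
    assume "T213 l xs"
    then obtain i j k where H: "i<j" "j<k" "k<length xs" "xs!j<xs!i" "xs!i<xs!k" "xs!k<l"
      unfolding T213_def by blast
    show False
    proof (cases "k = M")
      case True thus False using H assms(2) by simp
    next
      case False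
      hence "k < M" using H len by simp
      have "Q4 xs" unfolding Q4_def using H \<open>k<M\<close> assms(2) len
        by (intro exI[of _ i] exI[of _ j] exI[of _ k] exI[of _ M]) auto
      thus False using nQ by simp
    qed
  qed
  ultimately show ?thesis unfolding good_def by simp
qed



lemma count_two:
  assumes xs: "xs \<in> Perm M" and g: "good K xs" and K2: "2 \<le> K" and KM: "K \<le> Suc M"
  shows "card {m. 1 \<le> m \<and> m \<le> K \<and> Cp m K xs} = 2"
proof -
  have len: "length xs = M" using Perm_len[OF xs] .
  define Q where "Q = {i. i < length xs \<and> xs!i < K}"
  have finQ: "finite Q" unfolding Q_def by simp
  obtain p1 where p1: "p1 < length xs" "xs!p1 = 1" using Perm_has[OF xs, of 1] K2 KM by auto
  have "p1 \<in> Q" unfolding Q_def using p1 K2 by simp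
  hence neQ: "Q \<noteq> {}" by auto
  define q where "q = Max Q"
  have qQ: "q \<in> Q" unfolding q_def using finQ neQ by simp
  have qmax: "\<And>i. i < length xs \<Longrightarrow> xs!i < K \<Longrightarrow> i \<le> q"
    unfolding q_def using finQ by (simp add: Q_def)
  define r where "r = xs!q"
  have ql: "q < length xs" and rK: "r < K" using qQ unfolding Q_def r_def by auto
  have r1: "1 \<le> r" using Perm_nth[OF xs ql] unfolding r_def by simp
  have inj: "\<And>i j. i < length xs \<Longrightarrow> j < length xs \<Longrightarrow> xs!i = xs!j \<Longrightarrow> i = j"
    using Perm_inj[OF xs] by blast
  have ge1: "\<And>i. i < length xs \<Longrightarrow> 1 \<le> xs!i" using Perm_nth[OF xs] by force
  have A: "Cp 1 K xs" unfolding Cp_def using ge1 by (meson less_one not_le order.strict_trans1 less_trans)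
  have B: "Cp (Suc r) K xs"
  proof -
    have n132: "\<not> T132 K xs" and n213: "\<not> T213 K xs" using g unfolding good_def by auto
    {
      fix i j assume H: "i<j" "j<length xs" "xs!i < Suc r" "Suc r \<le> xs!j" "xs!j < K"
      have "j \<le> q" using qmax H by simp
      moreover have "j \<noteq> q" using H unfolding r_def by auto
      ultimately have jq: "j < q" by simp
      have "xs!i \<noteq> r" using inj[of i q] H jq ql unfolding r_def by auto
      hence "xs!i < xs!q" using H unfolding r_def by simp
      hence "T132 K xs" unfolding T132_def using H jq ql unfolding r_def
        by (intro exI[of _ i] exI[of _ j] exI[of _ q]) auto
      hence False using n132 by simp
    }
    moreover
    {
      fix i j assume H: "i<j" "j<length xs" "xs!j < xs!i" "xs!i < Suc r"
      have "j \<le> q" using qmax H rK by simp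
      moreover have "j \<noteq> q" using H unfolding r_def by auto
      ultimately have jq: "j < q" by simp
      have "xs!i \<noteq> r" using inj[of i q] H jq ql unfolding r_def by auto
      hence "xs!i < xs!q" using H unfolding r_def by simp
      hence "T213 K xs" unfolding T213_def using H jq ql rK unfolding r_def
        by (intro exI[of _ i] exI[of _ j] exI[of _ q]) auto
      hence False using n213 by simp
    }
    ultimately show ?thesis unfolding Cp_def by blast
  qed
  have C: "m = Suc r" if m: "2 \<le> m" "m \<le> K" "Cp m K xs" for m
  proof (rule ccontr)
    assume ne: "m \<noteq> Suc r"
    show False
    proof (cases "m \<le> r")
      case True
      have "p1 \<le> q" using qmax p1 K2 by simp
      moreover have "p1 \<noteq> q" using p1 True m unfolding r_def by auto
      ultimately have "p1 < q" by simp
      thus False using m(3) p1 ql True rK m(1) unfolding Cp_def r_def by force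
    next
      case False
      hence mr: "Suc r < m" using ne by simp
      obtain p where p: "p < length xs" "xs!p = Suc r" using Perm_has[OF xs, of "Suc r"] mr m KM by auto
      have "p \<le> q" using qmax p mr m by simp
      moreover have "p \<noteq> q" using p unfolding r_def by auto
      ultimately have "p < q" by simp
      thus False using m(3) p ql mr unfolding Cp_def r_def by force
    qed
  qed
  have "{m. 1 \<le> m \<and> m \<le> K \<and> Cp m K xs} = {1, Suc r}"
  proof
    show "{m. 1 \<le> m \<and> m \<le> K \<and> Cp m K xs} \<subseteq> {1, Suc r}"
    proof
      fix m assume "m \<in> {m. 1 \<le> m \<and> m \<le> K \<and> Cp m K xs}"
      thus "m \<in> {1, Suc r}" using C by (cases "m = 1") auto
    qed
    show "{1, Suc r} \<subseteq> {m. 1 \<le> m \<and> m \<le> K \<and> Cp m K xs}" using A B rK K2 by auto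
  qed
  thus ?thesis using r1 by simp
qed



lemma short_ok: "length xs < 3 \<Longrightarrow> good l xs \<and> \<not> P4 xs \<and> \<not> Q4 xs"
  unfolding good_def T132_def T213_def P4_def Q4_def by auto

lemma Perm0: "Perm 0 = {[]}" unfolding Perm_def by auto
lemma Perm1: "Perm 1 = {[1]}"
proof
  show "Perm 1 \<subseteq> {[1]}"
  proof
    fix xs assume a: "xs \<in> Perm 1"
    hence "length xs = 1" by (rule Perm_len)
    then obtain x where "xs = [x]" by (cases xs) auto
    thus "xs \<in> {[1]}" using a unfolding Perm_def by auto
  qed
  show "{[1]} \<subseteq> Perm 1" unfolding Perm_def by auto
qed

lemma G_short: "N < 3 \<Longrightarrow> G N l = Perm N"
  unfolding G_def AP_def using short_ok Perm_len by fastforce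

lemma case_small: "3 \<le> n \<Longrightarrow> l \<le> 3 \<Longrightarrow> 1 \<le> l \<Longrightarrow> s n l = (\<Sum>m=1..n-1. s (n-1) m)"
proof -
  assume a: "3 \<le> n" "l \<le> 3" "1 \<le> l"
  obtain N where n: "n = Suc N" using a by (cases n) auto
  have "s n l = card (G N l)" unfolding n using a n by (intro s_G) auto
  also have "G N l = AP N" unfolding G_def AP_def using good_small a(2) by blast
  also have "card (AP N) = (\<Sum>m=1..N. s N m)" using a n by (intro sum_s[symmetric]) auto
  finally show ?thesis unfolding n by simp
qed

lemma case_big: assumes "4 \<le> l" "l \<le> n"
  shows "s n l = 2 * s (n-1) (l-1) + (\<Sum>m=l..n-1. s (n-1) m)"
proof -
  define M where "M = n - 2"
  have n: "n = Suc (Suc M)" using assms unfolding M_def by simp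
  have "s n l = card (G (Suc M) l)" unfolding n using assms n by (intro s_G) auto
  define X1 where "X1 = {xs \<in> AP (Suc M). l \<le> xs!M}"
  define X2 where "X2 = {xs \<in> G (Suc M) l. xs!M < l}"
  have GX: "G (Suc M) l = X1 \<union> X2" unfolding X1_def X2_def G_def using good_auto by auto
  have "card (G (Suc M) l) = card X1 + card X2" unfolding GX
    by (rule card_Un_disjoint) (auto simp: X1_def X2_def finite_AP finite_G)
  moreover have "card X1 = (\<Sum>m=l..n-1. s (n-1) m)"
  proof -
    have "card X1 = (\<Sum>m\<in>{l..Suc M}. card {x\<in>X1. x!M = m})"
    proof (rule card_fibers)
      show "finite X1" unfolding X1_def using finite_AP by simp
      show "\<forall>x\<in>X1. x ! M \<in> {l..Suc M}"
      proof
        fix x assume "x \<in> X1"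
        hence x: "x \<in> Perm (Suc M)" "l \<le> x!M" unfolding X1_def AP_def by auto
        have "M < length x" using Perm_len[OF x(1)] by simp
        thus "x ! M \<in> {l..Suc M}" using Perm_nth[OF x(1)] x(2) by auto
      qed
    qed simp
    also have "\<dots> = (\<Sum>m\<in>{l..Suc M}. s (Suc M) m)"
    proof (rule sum.cong)
      fix m assume "m \<in> {l..Suc M}"
      hence "{x\<in>X1. x!M = m} = {xs \<in> AP (Suc M). xs!(Suc M - 1) = m}" unfolding X1_def by auto
      thus "card {x\<in>X1. x!M = m} = s (Suc M) m" unfolding s_alt by simp
    qed simp
    finally show ?thesis unfolding n by simp
  qed
  moreover have "card X2 = 2 * s (n-1) (l-1)"
  proof -
    have "X2 = {ys \<in> Perm (Suc M). \<not> P4 ys \<and> \<not> Q4 ys \<and> good l ys \<and> ys!M < l}"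
      unfolding X2_def G_def AP_def by auto
    hence "card X2 = card {(xs, m). xs \<in> Perm M \<and> m \<in> {1..Suc M} \<and>
       (\<not> P4 (ins m xs) \<and> \<not> Q4 (ins m xs) \<and> good l (ins m xs) \<and> ins m xs ! M < l)}"
      using card_ins by simp
    also have "{(xs, m). xs \<in> Perm M \<and> m \<in> {1..Suc M} \<and>
       (\<not> P4 (ins m xs) \<and> \<not> Q4 (ins m xs) \<and> good l (ins m xs) \<and> ins m xs ! M < l)}
       = Sigma (G M (l-1)) (\<lambda>xs. {m. 1 \<le> m \<and> m \<le> l-1 \<and> Cp m (l-1) xs})"
    proof (rule set_eqI)
      fix p :: "nat list \<times> nat"
      obtain xs m where p: "p = (xs, m)" by fastforce
      show "p \<in> {(xs, m). xs \<in> Perm M \<and> m \<in> {1..Suc M} \<and>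
       (\<not> P4 (ins m xs) \<and> \<not> Q4 (ins m xs) \<and> good l (ins m xs) \<and> ins m xs ! M < l)} \<longleftrightarrow>
        p \<in> Sigma (G M (l-1)) (\<lambda>xs. {m. 1 \<le> m \<and> m \<le> l-1 \<and> Cp m (l-1) xs})"
      proof (cases "xs \<in> Perm M")
        case True
        hence e: "ins m xs ! M = m" using Perm_len ins_last_nth by metis
        show ?thesis
        proof
          assume "p \<in> {(xs, m). xs \<in> Perm M \<and> m \<in> {1..Suc M} \<and>
            (\<not> P4 (ins m xs) \<and> \<not> Q4 (ins m xs) \<and> good l (ins m xs) \<and> ins m xs ! M < l)}"
          hence H: "m \<in> {1..Suc M}" "\<not> P4 xs" "\<not> Q4 xs" "good l (ins m xs)" "m < l"
            unfolding p P4_ins Q4_ins using e by auto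
          hence "good (l-1) xs" "Cp m (l-1) xs" using good_ins by auto
          thus "p \<in> Sigma (G M (l-1)) (\<lambda>xs. {m. 1 \<le> m \<and> m \<le> l-1 \<and> Cp m (l-1) xs})"
            unfolding p G_def AP_def using H True by auto
        next
          assume "p \<in> Sigma (G M (l-1)) (\<lambda>xs. {m. 1 \<le> m \<and> m \<le> l-1 \<and> Cp m (l-1) xs})"
          hence H: "\<not> P4 xs" "\<not> Q4 xs" "good (l-1) xs" "1 \<le> m" "m \<le> l-1" "Cp m (l-1) xs"
            unfolding p G_def AP_def by auto
          have ml: "m < l" using H(5) assms by simp
          have "good m xs" using good_mono H(3,5) by blast
          hence "\<not> T132 m xs" "\<not> T213 m xs" unfolding good_def by auto
          moreover have "good l (ins m xs)" using good_ins[OF ml] H by simp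
          ultimately show "p \<in> {(xs, m). xs \<in> Perm M \<and> m \<in> {1..Suc M} \<and>
            (\<not> P4 (ins m xs) \<and> \<not> Q4 (ins m xs) \<and> good l (ins m xs) \<and> ins m xs ! M < l)}"
            unfolding p P4_ins Q4_ins using e H True ml assms n by auto
        qed
      next
        case False
        thus ?thesis unfolding p G_def AP_def by auto
      qed
    qed
    also have "card (Sigma (G M (l-1)) (\<lambda>xs. {m. 1 \<le> m \<and> m \<le> l-1 \<and> Cp m (l-1) xs}))
       = (\<Sum>xs\<in>G M (l-1). card {m. 1 \<le> m \<and> m \<le> l-1 \<and> Cp m (l-1) xs})"
      by (rule card_SigmaI) (auto simp: finite_G)
    also have "\<dots> = (\<Sum>xs\<in>G M (l-1). 2)"
    proof (rule sum.cong)
      fix xs assume "xs \<in> G M (l-1)"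
      hence "xs \<in> Perm M" "good (l-1) xs" unfolding G_def AP_def by auto
      thus "card {m. 1 \<le> m \<and> m \<le> l-1 \<and> Cp m (l-1) xs} = 2"
        using assms n by (intro count_two) auto
    qed simp
    also have "\<dots> = 2 * card (G M (l-1))" by simp
    also have "card (G M (l-1)) = s (Suc M) (l-1)" using assms n by (intro s_G[symmetric]) auto
    finally show ?thesis unfolding n by simp
  qed
  ultimately show ?thesis using \<open>s n l = card (G (Suc M) l)\<close> by simp
qed

theorem proposition5p1:
  shows "s 1 1 = 1 \<and> s 2 1 = 1 \<and> s 2 2 = 1 \<and>
    (\<forall>n\<ge>3. s n 1 = (\<Sum>m=1..n-1. s (n-1) m) \<and>
             s n 2 = (\<Sum>m=1..n-1. s (n-1) m) \<and>
             s n 3 = (\<Sum>m=1..n-1. s (n-1) m)) \<and>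
    (\<forall>n l. 4 \<le> l \<and> l \<le> n \<longrightarrow>
             s n l = 2 * s (n-1) (l-1) + (\<Sum>m=l..n-1. s (n-1) m))"
proof (intro conjI allI impI)
  have "s 1 1 = card (G 0 1)" using s_G[of 1 0] by simp
  thus "s 1 1 = 1" using G_short[of 0] Perm0 by simp
  have "s 2 1 = card (G 1 1)" using s_G[of 1 1] by (simp add: numeral_2_eq_2)
  thus "s 2 1 = 1" using G_short[of 1] Perm1 by simp
  have "s 2 2 = card (G 1 2)" using s_G[of 2 1] by (simp add: numeral_2_eq_2)
  thus "s 2 2 = 1" using G_short[of 1] Perm1 by simp
next
  fix n :: nat assume "3 \<le> n"
  thus "s n 1 = (\<Sum>m=1..n-1. s (n-1) m)" "s n 2 = (\<Sum>m=1..n-1. s (n-1) m)"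
     "s n 3 = (\<Sum>m=1..n-1. s (n-1) m)" using case_small by auto
next
  fix n l :: nat assume "4 \<le> l \<and> l \<le> n"
  thus "s n l = 2 * s (n-1) (l-1) + (\<Sum>m=l..n-1. s (n-1) m)" using case_big by auto
qed


end
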